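(* Let $n\ge 1$. For $0<h<1$ let $\mathcal{T}(h)=h^{2}\sum_{\vec{j}\in\mathbb{Z}^n}h^n\delta_{h\vec{j}}$ (a measure on $\mathbb{R}^n$) and $\mathcal{S}(h)=\sum_{\vec{k}\in\mathbb{Z}^n}\sum_{\{\vec{j}\in\mathbb{Z}^n:\,|\vec{j}-\vec{k}|=1\}}h^n\,\delta_{(h\vec{k},h\vec{j})}$ (a measure on $\mathbb{R}^n\times\mathbb{R}^n$). Let $\Phi\in\mathscr{C}^2(\mathbb{R}^n\times\mathbb{R}^n)$ with $\Phi(x,x)=0$ for all $x\in\mathbb{R}^n$. For each $h$, let $\psi_h:h\mathbb{Z}^n\to\mathbb{R}$ be the function satisfying $$\int_{\mathbb{R}^n}\varphi\,\psi_h\,d\mathcal{T}(h)=\iint_{\mathbb{R}^n\times\mathbb{R}^n}\varphi(x)\Phi(x,y)\,d\mathcal{S}(h)(x,y)\quad\text{for all }\varphi\in\mathscr{C}_c(\mathbb{R}^n),$$ and set $\mathcal{Q}(\Phi,h)(x)=\sum_{\vec{k}\in\mathbb{Z}^n}\psi_h(h\vec{k})\,\mathcal{X}_{Q(h\vec{k})}(x)$, where $Q(h\vec{k})=\prod_{m=1}^n[hk_m,h(k_m+1))$. Then for every $\varphi\in\mathscr{C}_c(\mathbb{R}^n)$, $$\lim_{h\to 0^+}\int_{\mathbb{R}^n}\mathcal{Q}(\Phi,h)(x)\varphi(x)\,dx=\int_{\mathbb{R}^n}\Delta_y\Phi(x,x)\,\varphi(x)\,dx,$$ i.e. $\frac{d\mathcal{S}}{d\mathcal{T}}(\Phi)=\Delta_y\Phi(x,x)$.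 Moreover, for $f\in\mathscr{C}^2(\mathbb{R}^n)$ and $\Phi(x,y)=f(y)-f(x)$, $\frac{d\mathcal{S}}{d\mathcal{T}}(\Phi)=\Delta f$.
   Context: $\Delta_y\Phi(x,x)$ denotes $\sum_{i=1}^n\frac{\partial^2\Phi}{\partial y_i^2}$ evaluated at $(x,x)$; $\Delta f=\sum_i\partial^2 f/\partial x_i^2$. $\delta_p$ is the unit point mass at $p$. The derivative $\frac{d\mathcal{S}}{d\mathcal{T}}(\Phi)$ is defined as the limit, as $h\to0^+$, of the quotients $\mathcal{Q}(\Phi,h)$ (the Kirchhoff divergence $\psi_h$ of $\Phi$ with respect to $\mathcal{T}(h),\mathcal{S}(h)$, extended as a piecewise constant function on the cubes $Q(h\vec{k})$), the limit being taken in the sense of distributions, i.e. tested against $\varphi\in\mathscr{C}_c(\mathbb{R}^n)$ with Lebesgue measure; the limit is identified with a function $g$ when $\int \mathcal{Q}(\Phi,h)\varphi\,dx\to\int g\varphi\,dx$ for all such $\varphi$. *)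

theory Defs
  imports "HOL-Analysis.Analysis"
begin

definition lat :: "real \<Rightarrow> int^'n \<Rightarrow> real^'n" where
  "lat h k = (\<chi> i. h * of_int (k $ i))"

definition nbr :: "int^'n \<Rightarrow> int^'n \<Rightarrow> bool" where
  "nbr j k \<longleftrightarrow> norm ((\<chi> i. real_of_int (j $ i - k $ i)) :: real^'n) = 1"

definition cube :: "real \<Rightarrow> int^'n \<Rightarrow> (real^'n) set" where
  "cube h k = {x. \<forall>i. h * of_int (k $ i) \<le> x $ i \<and> x $ i < h * (of_int (k $ i) + 1)}"

definition Cc :: "(real^'n \<Rightarrow> real) \<Rightarrow> bool" where
  "Cc \<phi> \<longleftrightarrow> continuous_on UNIV \<phi> \<and> (\<exists>K. compact K \<and> (\<forall>x. x \<notin> K \<longrightarrow> \<phi> x = 0))"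

definition C2 :: "('a::euclidean_space \<Rightarrow> real) \<Rightarrow> bool" where
  "C2 f \<longleftrightarrow> (\<exists>(f' :: 'a \<Rightarrow> 'a \<Rightarrow>\<^sub>L real) (f'' :: 'a \<Rightarrow> 'a \<Rightarrow>\<^sub>L ('a \<Rightarrow>\<^sub>L real)).
      (\<forall>x. (f has_derivative blinfun_apply (f' x)) (at x)) \<and>
      (\<forall>x. (f' has_derivative blinfun_apply (f'' x)) (at x)) \<and>
      continuous_on UNIV f'')"

text \<open>psi (a function on hZ^n, indexed by k in Z^n) is the Kirchhoff divergence of Phi
  w.r.t. T(h) = h^2 sum_j h^n delta_{hj} and S(h) = sum_k sum_{|j-k|=1} h^n delta_{(hk,hj)}:
  the integrals against these discrete measures are written out as the corresponding sums.\<close>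
definition kirchhoff_div :: "real \<Rightarrow> ((real^'n) \<times> (real^'n) \<Rightarrow> real) \<Rightarrow> (int^'n \<Rightarrow> real) \<Rightarrow> bool" where
  "kirchhoff_div h \<Phi> \<psi> \<longleftrightarrow>
     (\<forall>\<phi>. Cc \<phi> \<longrightarrow>
        (\<Sum>\<^sub>\<infinity>j. h^2 * h^CARD('n) * (\<phi> (lat h j) * \<psi> j)) =
        (\<Sum>\<^sub>\<infinity>k. (\<Sum>j\<in>{j. nbr j k}. h^CARD('n) * (\<phi> (lat h k) * \<Phi> (lat h k, lat h j)))))"

definition Qfun :: "real \<Rightarrow> (int^'n \<Rightarrow> real) \<Rightarrow> real^'n \<Rightarrow> real" where
  "Qfun h \<psi> x = (\<Sum>\<^sub>\<infinity>k. \<psi> k * indicator (cube h k) x)"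

definition lap_y :: "((real^'n) \<times> (real^'n) \<Rightarrow> real) \<Rightarrow> real^'n \<Rightarrow> real" where
  "lap_y \<Phi> x = (\<Sum>i\<in>UNIV. (deriv ^^ 2) (\<lambda>t. \<Phi> (x, x + t *\<^sub>R axis i 1)) 0)"

definition lap :: "(real^'n \<Rightarrow> real) \<Rightarrow> real^'n \<Rightarrow> real" where
  "lap f x = (\<Sum>i\<in>UNIV. (deriv ^^ 2) (\<lambda>t. f (x + t *\<^sub>R axis i 1)) 0)"

end

theory Submission
  imports Defs
begin


lemma int_sumsq:
  fixes d :: "'n::finite \<Rightarrow> int"
  shows "(\<Sum>i\<in>UNIV. (d i)^2) = 1 \<longleftrightarrow> (\<exists>i. (d i = 1 \<or> d i = -1) \<and> (\<forall>m. m \<noteq> i \<longrightarrow> d m = 0))"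
proof
  assume H: "(\<Sum>i\<in>UNIV. (d i)^2) = 1"
  have "\<exists>i. d i \<noteq> 0"
  proof (rule ccontr)
    assume "\<not> ?thesis" then have "\<forall>i. d i = 0" by blast
    with H show False by simp
  qed
  then obtain i where di: "d i \<noteq> 0" by blast
  have split: "(\<Sum>i\<in>UNIV. (d i)^2) = (d i)^2 + (\<Sum>m\<in>UNIV-{i}. (d m)^2)"
    by (simp add: sum.remove)
  have ge: "(d i)^2 \<ge> 1" using di
    by (smt (verit) power2_less_eq_zero_iff zero_less_power2 int_one_le_iff_zero_less)
  have rest: "(\<Sum>m\<in>UNIV-{i}. (d m)^2) \<ge> 0" by (simp add: sum_nonneg)
  have "(d i)^2 = 1" using H split ge rest by linarith
  then have "d i = 1 \<or> d i = -1" using power2_eq_1_iff by blast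
  moreover have "(\<Sum>m\<in>UNIV-{i}. (d m)^2) = 0" using H split ge rest by linarith
  then have "\<forall>m\<in>UNIV-{i}. (d m)^2 = 0"
    using sum_nonneg_eq_0_iff[of "UNIV-{i}" "\<lambda>m. (d m)^2"] by simp
  then have "\<forall>m. m \<noteq> i \<longrightarrow> d m = 0" by simp
  ultimately show "\<exists>i. (d i = 1 \<or> d i = -1) \<and> (\<forall>m. m \<noteq> i \<longrightarrow> d m = 0)" by blast
next
  assume "\<exists>i. (d i = 1 \<or> d i = -1) \<and> (\<forall>m. m \<noteq> i \<longrightarrow> d m = 0)"
  then obtain i where a: "d i = 1 \<or> d i = -1" and b: "\<forall>m. m \<noteq> i \<longrightarrow> d m = 0" by blast
  have "(\<Sum>i\<in>UNIV. (d i)^2) = (d i)^2 + (\<Sum>m\<in>UNIV-{i}. (d m)^2)"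
    by (simp add: sum.remove)
  also have "(\<Sum>m\<in>UNIV-{i}. (d m)^2) = 0" using b by simp
  finally show "(\<Sum>i\<in>UNIV. (d i)^2) = 1" using a by auto
qed

lemma nbr_iff: "nbr j k \<longleftrightarrow> (\<exists>i. j = k + axis i 1 \<or> j = k - axis i 1)"
proof -
  have "nbr j k \<longleftrightarrow> (\<Sum>i\<in>UNIV. (real_of_int (j$i - k$i))^2) = 1"
    unfolding nbr_def norm_vec_def L2_set_def by simp
  also have "\<dots> \<longleftrightarrow> (\<Sum>i\<in>UNIV. (j$i - k$i)^2) = (1::int)"
    by (metis (mono_tags, lifting) of_int_eq_1_iff of_int_power of_int_sum sum.cong)
  also have "\<dots> \<longleftrightarrow> (\<exists>i. (j$i - k$i = 1 \<or> j$i - k$i = -1) \<and> (\<forall>m. m \<noteq> i \<longrightarrow> j$m - k$m = 0))"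
    by (rule int_sumsq)
  also have "\<dots> \<longleftrightarrow> (\<exists>i. j = k + axis i 1 \<or> j = k - axis i 1)"
  proof
    assume "\<exists>i. (j$i - k$i = 1 \<or> j$i - k$i = -1) \<and> (\<forall>m. m \<noteq> i \<longrightarrow> j$m - k$m = 0)"
    then obtain i where a: "j$i - k$i = 1 \<or> j$i - k$i = -1" and b: "\<forall>m. m \<noteq> i \<longrightarrow> j$m - k$m = 0" by blast
    from a show "\<exists>i. j = k + axis i 1 \<or> j = k - axis i 1"
    proof
      assume "j$i - k$i = 1" then have "j = k + axis i 1" using b
        by (auto simp: vec_eq_iff axis_def)
      then show ?thesis by blast
    next
      assume "j$i - k$i = -1" then have "j = k - axis i 1" using b
        by (auto simp: vec_eq_iff axis_def)
      then show ?thesis by blast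
    qed
  next
    assume "\<exists>i. j = k + axis i 1 \<or> j = k - axis i 1"
    then obtain i where "j = k + axis i 1 \<or> j = k - axis i 1" by blast
    then show "\<exists>i. (j$i - k$i = 1 \<or> j$i - k$i = -1) \<and> (\<forall>m. m \<noteq> i \<longrightarrow> j$m - k$m = 0)"
      by (intro exI[of _ i]) (auto simp: axis_def)
  qed
  finally show ?thesis .
qed

lemma sum_nbr:
  fixes G :: "int^'n \<Rightarrow> real"
  shows "(\<Sum>j\<in>{j. nbr j k}. G j) = (\<Sum>i\<in>UNIV. G (k + axis i 1) + G (k - axis i 1))"
proof -
  have S: "{j. nbr j k} = range (\<lambda>i. k + axis i 1) \<union> range (\<lambda>i. k - axis i 1)"
    by (auto simp: nbr_iff)
  have D: "range (\<lambda>i. k + axis i 1) \<inter> range (\<lambda>i. k - axis i 1) = {}"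
  proof (rule ccontr)
    assume "\<not> ?thesis"
    then obtain i m where "k + axis i 1 = k - axis m (1::int)" by auto
    then have "(k + axis i 1) $ i = (k - axis m (1::int)) $ i" by simp
    then show False by (auto simp: axis_def split: if_splits)
  qed
  have I1: "inj (\<lambda>i. k + axis i (1::int))" by (auto simp: inj_def axis_eq_axis)
  have I2: "inj (\<lambda>i. k - axis i (1::int))" by (auto simp: inj_def axis_eq_axis)
  have "(\<Sum>j\<in>{j. nbr j k}. G j) = (\<Sum>j\<in>range (\<lambda>i. k + axis i 1). G j) + (\<Sum>j\<in>range (\<lambda>i. k - axis i 1). G j)"
    unfolding S by (rule sum.union_disjoint) (use D in auto)
  also have "\<dots> = (\<Sum>i\<in>UNIV. G (k + axis i 1)) + (\<Sum>i\<in>UNIV. G (k - axis i 1))"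
    by (simp add: sum.reindex[OF I1] sum.reindex[OF I2])
  finally show ?thesis by (simp add: sum.distrib)
qed



lemma lat_add: "lat h (k + axis i 1) = lat h k + h *\<^sub>R axis i 1"
  and lat_sub: "lat h (k - axis i 1) = lat h k - h *\<^sub>R axis i 1"
  by (auto simp: lat_def vec_eq_iff axis_def algebra_simps)

lemma lat_far:
  assumes "0 < h" "j \<noteq> k"
  shows "h \<le> norm (lat h j - lat h k)"
proof -
  obtain i where i: "j$i \<noteq> k$i" using assms(2) by (auto simp: vec_eq_iff)
  then have "1 \<le> \<bar>j$i - k$i\<bar>" by linarith
  then have "1 \<le> \<bar>real_of_int (j$i - k$i)\<bar>" by linarith
  then have "h * 1 \<le> h * \<bar>real_of_int (j$i - k$i)\<bar>" using assms(1) by (intro mult_left_mono) auto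
  also have "\<dots> = \<bar>(lat h j - lat h k) $ i\<bar>"
    using assms(1) by (simp add: lat_def abs_mult right_diff_distrib[symmetric])
  also have "\<dots> \<le> norm (lat h j - lat h k)" by (rule component_le_norm_cart)
  finally show ?thesis by simp
qed

lemma infsum_single_pt:
  fixes g :: "'a \<Rightarrow> real"
  assumes "\<And>x. x \<noteq> a \<Longrightarrow> g x = 0"
  shows "(\<Sum>\<^sub>\<infinity>x. g x) = g a"
proof -
  have "(\<Sum>\<^sub>\<infinity>x. g x) = (\<Sum>\<^sub>\<infinity>x\<in>{a}. g x)"
    by (rule infsum_cong_neutral) (use assms in auto)
  also have "\<dots> = g a" by simp
  finally show ?thesis .
qed

lemma psi_eq:
  fixes \<Phi> :: "(real^'n) \<times> (real^'n) \<Rightarrow> real"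
  assumes h: "0 < h" and K: "kirchhoff_div h \<Phi> \<psi>"
  shows "\<psi> k = (\<Sum>i\<in>UNIV. \<Phi> (lat h k, lat h k + h *\<^sub>R axis i 1) + \<Phi> (lat h k, lat h k - h *\<^sub>R axis i 1)) / h^2"
proof -
  define \<phi> :: "real^'n \<Rightarrow> real" where "\<phi> x = max 0 (1 - 2 * norm (x - lat h k) / h)" for x
  have "Cc \<phi>"
    unfolding Cc_def
  proof
    show "continuous_on UNIV \<phi>" unfolding \<phi>_def by (intro continuous_intros) (use h in auto)
    show "\<exists>K. compact K \<and> (\<forall>x. x \<notin> K \<longrightarrow> \<phi> x = 0)"
    proof (intro exI conjI allI impI)
      show "compact (cball (lat h k) (h/2))" by simp
      fix x assume "x \<notin> cball (lat h k) (h/2)"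
      then have "h/2 < norm (x - lat h k)" by (simp add: dist_norm norm_minus_commute)
      then have "1 - 2 * norm (x - lat h k) / h < 0" using h by (simp add: field_simps)
      then show "\<phi> x = 0" unfolding \<phi>_def by simp
    qed
  qed
  have phiv: "\<phi> (lat h j) = (if j = k then 1 else 0)" for j
  proof (cases "j = k")
    case False
    then have "h \<le> norm (lat h j - lat h k)" using lat_far h by blast
    then have "1 - 2 * norm (lat h j - lat h k) / h < 0" using h by (simp add: field_simps)
    then show ?thesis using False unfolding \<phi>_def by simp
  qed (simp add: \<phi>_def)
  have E: "(\<Sum>\<^sub>\<infinity>j. h^2 * h^CARD('n) * (\<phi> (lat h j) * \<psi> j)) =
        (\<Sum>\<^sub>\<infinity>k. (\<Sum>j\<in>{j. nbr j k}. h^CARD('n) * (\<phi> (lat h k) * \<Phi> (lat h k, lat h j))))"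
    using K \<open>Cc \<phi>\<close> unfolding kirchhoff_div_def by blast
  have L: "(\<Sum>\<^sub>\<infinity>j. h^2 * h^CARD('n) * (\<phi> (lat h j) * \<psi> j)) = h^2 * h^CARD('n) * \<psi> k"
    by (subst infsum_single_pt[of k]) (auto simp: phiv)
  have R: "(\<Sum>\<^sub>\<infinity>k'. (\<Sum>j\<in>{j. nbr j k'}. h^CARD('n) * (\<phi> (lat h k') * \<Phi> (lat h k', lat h j))))
      = (\<Sum>j\<in>{j. nbr j k}. h^CARD('n) * \<Phi> (lat h k, lat h j))"
    by (subst infsum_single_pt[of k]) (auto simp: phiv)
  have "h^2 * h^CARD('n) * \<psi> k = h^CARD('n) * (\<Sum>j\<in>{j. nbr j k}. \<Phi> (lat h k, lat h j))"
    using E L R by (simp add: sum_distrib_left)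
  then have "\<psi> k = (\<Sum>j\<in>{j. nbr j k}. \<Phi> (lat h k, lat h j)) / h^2"
    using h by (simp add: field_simps)
  then show ?thesis by (simp add: sum_nbr lat_add lat_sub)
qed

definition fl :: "real \<Rightarrow> real^'n \<Rightarrow> int^'n" where
  "fl h x = (\<chi> i. \<lfloor>x $ i / h\<rfloor>)"

lemma cube_iff:
  assumes "0 < h"
  shows "x \<in> cube h k \<longleftrightarrow> k = fl h x"
proof -
  have "x \<in> cube h k \<longleftrightarrow> (\<forall>i. of_int (k$i) \<le> x$i / h \<and> x$i / h < of_int (k$i) + 1)"
    using assms by (simp add: cube_def field_simps)
  also have "\<dots> \<longleftrightarrow> (\<forall>i. \<lfloor>x $ i / h\<rfloor> = k$i)"
    by (simp add: floor_eq_iff)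
  also have "\<dots> \<longleftrightarrow> k = fl h x" by (auto simp: fl_def vec_eq_iff)
  finally show ?thesis .
qed

lemma Qfun_eq:
  assumes "0 < h"
  shows "Qfun h \<psi> x = \<psi> (fl h x)"
  unfolding Qfun_def
  by (subst infsum_single_pt[of "fl h x"]) (auto simp: cube_iff[OF assms] indicator_def)



definition HD :: "((real^'n) \<times> (real^'n) \<Rightarrow> real) \<Rightarrow> ('n \<Rightarrow> (real^'n) \<times> (real^'n) \<Rightarrow> real)
   \<Rightarrow> ('n \<Rightarrow> (real^'n) \<times> (real^'n) \<Rightarrow> real) \<Rightarrow> bool" where
  "HD \<Phi> D1 D2 \<longleftrightarrow> continuous_on UNIV \<Phi> \<and>
     (\<forall>i x y. ((\<lambda>t. \<Phi> (x, y + t *\<^sub>R axis i 1)) has_real_derivative D1 i (x, y)) (at 0)) \<and>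
     (\<forall>i x y. ((\<lambda>t. D1 i (x, y + t *\<^sub>R axis i 1)) has_real_derivative D2 i (x, y)) (at 0)) \<and>
     (\<forall>i. continuous_on UNIV (D2 i))"

lemma shift_deriv:
  fixes A B :: "(real^'n) \<times> (real^'n) \<Rightarrow> real"
  assumes "\<forall>x y. ((\<lambda>t. A (x, y + t *\<^sub>R v)) has_real_derivative B (x, y)) (at 0)"
  shows "((\<lambda>t. A (x, y + t *\<^sub>R v)) has_real_derivative B (x, y + s *\<^sub>R v)) (at s)"
proof -
  have "((\<lambda>t. A (x, (y + s *\<^sub>R v) + t *\<^sub>R v)) has_real_derivative B (x, y + s *\<^sub>R v)) (at 0)"
    using assms by blast
  moreover have "(\<lambda>t. A (x, (y + s *\<^sub>R v) + t *\<^sub>R v)) = (\<lambda>t. (\<lambda>t. A (x, y + t *\<^sub>R v)) (t + s))"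
    by (simp add: algebra_simps scaleR_add_left)
  ultimately have "((\<lambda>t. (\<lambda>t. A (x, y + t *\<^sub>R v)) (t + s)) has_real_derivative B (x, y + s *\<^sub>R v)) (at 0)"
    by simp
  then show ?thesis using DERIV_shift[of "\<lambda>t. A (x, y + t *\<^sub>R v)" _ 0 s] by simp
qed

lemma second_diff:
  fixes \<Phi> :: "(real^'n) \<times> (real^'n) \<Rightarrow> real"
  assumes HD: "HD \<Phi> D1 D2" and z: "\<Phi> (p, p) = 0" and h: "0 < h"
  shows "\<exists>s1 s2. \<bar>s1\<bar> < h \<and> \<bar>s2\<bar> < h \<and>
     \<Phi> (p, p + h *\<^sub>R axis i 1) + \<Phi> (p, p - h *\<^sub>R axis i 1)
       = h^2 / 2 * (D2 i (p, p + s1 *\<^sub>R axis i 1) + D2 i (p, p + s2 *\<^sub>R axis i 1))"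
proof -
  define e :: "real^'n" where "e = axis i 1"
  define F where "F = (\<lambda>t. \<Phi> (p, p + t *\<^sub>R e))"
  define diff where "diff m = (if m = 0 then F else if m = 1 then (\<lambda>t. D1 i (p, p + t *\<^sub>R e))
      else (\<lambda>t. D2 i (p, p + t *\<^sub>R e)))" for m :: nat
  have d1: "\<forall>x y. ((\<lambda>t. \<Phi> (x, y + t *\<^sub>R e)) has_real_derivative D1 i (x, y)) (at 0)"
    and d2: "\<forall>x y. ((\<lambda>t. D1 i (x, y + t *\<^sub>R e)) has_real_derivative D2 i (x, y)) (at 0)"
    using HD unfolding HD_def e_def by blast+
  have DS: "DERIV (diff m) t :> diff (Suc m) t" if "m < 2" for m t
  proof -
    have "m = 0 \<or> m = 1" using that by auto
    then show ?thesis
    proof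
      assume "m = 0" then show ?thesis
        using shift_deriv[OF d1, of p p t] by (simp add: diff_def F_def)
    next
      assume "m = 1" then show ?thesis
        using shift_deriv[OF d2, of p p t] by (simp add: diff_def)
    qed
  qed
  obtain s1 where s1: "0 < s1" "s1 < h"
    "F h = (\<Sum>m<2. diff m 0 / fact m * h ^ m) + diff 2 s1 / fact 2 * h ^ 2"
    using Maclaurin[of h 2 diff F] h DS by (auto simp: diff_def)
  obtain s2 where s2: "-h < s2" "s2 < 0"
    "F (-h) = (\<Sum>m<2. diff m 0 / fact m * (-h) ^ m) + diff 2 s2 / fact 2 * (-h) ^ 2"
    using Maclaurin_minus[of "-h" 2 diff F] h DS by (auto simp: diff_def)
  have F0: "F 0 = 0" using z by (simp add: F_def)
  have "F h + F (-h) = h^2 / 2 * (D2 i (p, p + s1 *\<^sub>R e) + D2 i (p, p + s2 *\<^sub>R e))"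
    using s1(3) s2(3) F0 by (simp add: diff_def numeral_2_eq_2 lessThan_Suc field_simps)
  then show ?thesis using s1 s2 unfolding F_def e_def
    by (intro exI[of _ s1] exI[of _ s2]) (auto simp: algebra_simps)
qed

lemma lap_y_HD:
  fixes \<Phi> :: "(real^'n) \<times> (real^'n) \<Rightarrow> real"
  assumes HD: "HD \<Phi> D1 D2"
  shows "lap_y \<Phi> x = (\<Sum>i\<in>UNIV. D2 i (x, x))"
  unfolding lap_y_def
proof (rule sum.cong[OF refl])
  fix i :: 'n
  define e :: "real^'n" where "e = axis i 1"
  have d1: "\<forall>x y. ((\<lambda>t. \<Phi> (x, y + t *\<^sub>R e)) has_real_derivative D1 i (x, y)) (at 0)"
    and d2: "\<forall>x y. ((\<lambda>t. D1 i (x, y + t *\<^sub>R e)) has_real_derivative D2 i (x, y)) (at 0)"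
    using HD unfolding HD_def e_def by blast+
  have "deriv (\<lambda>t. \<Phi> (x, x + t *\<^sub>R e)) = (\<lambda>s. D1 i (x, x + s *\<^sub>R e))"
    using shift_deriv[OF d1] by (intro ext DERIV_imp_deriv) blast
  moreover have "deriv (\<lambda>s. D1 i (x, x + s *\<^sub>R e)) 0 = D2 i (x, x)"
    using shift_deriv[OF d2, of x x 0] by (intro DERIV_imp_deriv) simp
  ultimately show "(deriv ^^ 2) (\<lambda>t. \<Phi> (x, x + t *\<^sub>R axis i 1)) 0 = D2 i (x, x)"
    by (simp add: numeral_2_eq_2 e_def)
qed

lemma C2_dir:
  fixes g :: "'a::euclidean_space \<Rightarrow> real"
  assumes d: "\<forall>x. (g has_derivative blinfun_apply (g' x)) (at x)"
    and dd: "\<forall>x. (g' has_derivative blinfun_apply (g'' x)) (at x)"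
  shows "((\<lambda>t. g (z + t *\<^sub>R v)) has_real_derivative g' z v) (at 0)"
    and "((\<lambda>t. g' (z + t *\<^sub>R v) v) has_real_derivative g'' z v v) (at 0)"
proof -
  have p: "((\<lambda>t::real. z + t *\<^sub>R v) has_derivative (\<lambda>t. t *\<^sub>R v)) (at 0)"
    by (auto intro!: derivative_eq_intros)
  have "((\<lambda>t. g (z + t *\<^sub>R v)) has_derivative (\<lambda>t. g' (z + 0 *\<^sub>R v) (t *\<^sub>R v))) (at 0)"
    by (rule has_derivative_compose[OF p]) (use d in simp)
  moreover have "(\<lambda>t. t * g' z v) = (*) (g' z v)" by (auto simp: mult.commute)
  ultimately show "((\<lambda>t. g (z + t *\<^sub>R v)) has_real_derivative g' z v) (at 0)"
    by (simp add: has_field_derivative_def blinfun.scaleR_right)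
  have "((\<lambda>t. g' (z + t *\<^sub>R v)) has_derivative (\<lambda>t. g'' (z + 0 *\<^sub>R v) (t *\<^sub>R v))) (at 0)"
    by (rule has_derivative_compose[OF p]) (use dd in simp)
  then have "((\<lambda>t. blinfun_apply (g' (z + t *\<^sub>R v)) v) has_derivative (\<lambda>t. blinfun_apply (g'' z (t *\<^sub>R v)) v)) (at 0)"
    by (auto intro!: derivative_eq_intros)
  moreover have "(\<lambda>t. t * g'' z v v) = (*) (g'' z v v)" by (auto simp: mult.commute)
  ultimately show "((\<lambda>t. g' (z + t *\<^sub>R v) v) has_real_derivative g'' z v v) (at 0)"
    by (simp add: has_field_derivative_def blinfun.scaleR_right blinfun.scaleR_left)
qed



definition P :: "real \<Rightarrow> real^'n \<Rightarrow> real^'n" where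
  "P h x = lat h (fl h x)"

definition G :: "((real^'n) \<times> (real^'n) \<Rightarrow> real) \<Rightarrow> real \<Rightarrow> real^'n \<Rightarrow> real" where
  "G \<Phi> h x = (\<Sum>i\<in>UNIV. \<Phi> (P h x, P h x + h *\<^sub>R axis i 1) + \<Phi> (P h x, P h x - h *\<^sub>R axis i 1)) / h^2"

lemma P_comp:
  assumes "0 < h"
  shows "\<bar>(P h x) $ m - x $ m\<bar> \<le> h"
proof -
  have a: "real_of_int \<lfloor>x$m / h\<rfloor> \<le> x$m / h" "x$m / h < real_of_int \<lfloor>x$m / h\<rfloor> + 1"
    by linarith+
  have "h * real_of_int \<lfloor>x$m / h\<rfloor> \<le> h * (x$m / h)"
    using a(1) assms by (intro mult_left_mono) auto
  moreover have "h * (x$m / h) < h * (real_of_int \<lfloor>x$m / h\<rfloor> + 1)"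
    using a(2) assms by (intro mult_strict_left_mono) auto
  ultimately show ?thesis using assms
    by (simp add: P_def lat_def fl_def algebra_simps)
qed

lemma P_norm:
  fixes x :: "real^'n"
  assumes "0 < h"
  shows "norm (P h x - x) \<le> real CARD('n) * h"
proof -
  have "norm (P h x - x) \<le> (\<Sum>m\<in>UNIV. \<bar>(P h x - x) $ m\<bar>)" by (rule norm_le_l1_cart)
  also have "\<dots> \<le> (\<Sum>m\<in>(UNIV::'n set). h)"
    by (intro sum_mono) (use P_comp[OF assms] in simp)
  finally show ?thesis by simp
qed

lemma P_near:
  fixes x :: "real^'n"
  assumes "0 < h" "\<bar>s\<bar> \<le> h"
  shows "dist (P h x, P h x + s *\<^sub>R axis i 1) (x, x) \<le> (2 * real CARD('n::finite) + 1) * h"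
proof -
  have "dist (P h x, P h x + s *\<^sub>R axis i 1) (x, x) = norm (P h x - x, (P h x - x) + s *\<^sub>R axis i 1)"
    by (simp add: dist_norm algebra_simps)
  also have "\<dots> \<le> norm (P h x - x) + norm ((P h x - x) + s *\<^sub>R axis i (1::real))"
    by (rule norm_Pair_le)
  also have "\<dots> \<le> norm (P h x - x) + (norm (P h x - x) + norm (s *\<^sub>R axis i (1::real)))"
    by (intro add_left_mono norm_triangle_ineq)
  also have "norm (s *\<^sub>R axis i (1::real)) = \<bar>s\<bar>" by simp
  finally show ?thesis using P_norm[OF assms(1), of x] assms(2) by (simp add: algebra_simps)
qed

lemma P_meas: "P h \<in> borel_measurable borel"
proof (rule borel_measurable_euclidean_space[THEN iffD2], intro ballI)
  fix b :: "real^'n" assume "b \<in> Basis"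
  then obtain i where b: "b = axis i 1" by (auto simp: Basis_vec_def)
  have "(\<lambda>x. P h x \<bullet> b) = (\<lambda>x. h * real_of_int \<lfloor>x$i / h\<rfloor>)"
    by (simp add: b inner_axis P_def lat_def fl_def)
  also have "\<dots> \<in> borel_measurable borel" by measurable
  finally show "(\<lambda>x. P h x \<bullet> b) \<in> borel_measurable borel" .
qed

lemma G_meas:
  fixes \<Phi> :: "(real^'n) \<times> (real^'n) \<Rightarrow> real"
  assumes "continuous_on UNIV \<Phi>"
  shows "G \<Phi> h \<in> borel_measurable borel"
proof -
  define \<Psi> where "\<Psi> p = (1 / h^2) * (\<Sum>i\<in>UNIV. \<Phi> (p, p + h *\<^sub>R axis i 1) + \<Phi> (p, p - h *\<^sub>R axis i 1))" for p :: "real^'n"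
  have "continuous_on UNIV \<Psi>" unfolding \<Psi>_def
    by (intro continuous_intros continuous_on_compose2[OF assms]) auto
  then have "\<Psi> \<in> borel_measurable borel" by (rule borel_measurable_continuous_onI)
  moreover have "G \<Phi> h = \<Psi> \<circ> P h" by (auto simp: G_def \<Psi>_def)
  ultimately show ?thesis using P_meas measurable_comp by metis
qed

lemma Cc_integrable:
  fixes g :: "real^'n \<Rightarrow> real"
  assumes "continuous_on UNIV g" "compact K" "\<And>x. x \<notin> K \<Longrightarrow> g x = 0"
  shows "g integrable_on UNIV"
proof -
  obtain a b where ab: "K \<subseteq> cbox a b" using compact_imp_bounded[OF assms(2)] bounded_subset_cbox_symmetric by metis
  have "g integrable_on cbox a b" using assms(1) by (intro integrable_continuous continuous_on_subset[OF assms(1)]) auto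
  then show ?thesis by (rule integrable_on_superset) (use ab assms(3) in auto)
qed



lemma borel_to_lebesgue:
  assumes "f \<in> borel_measurable borel"
  shows "f \<in> borel_measurable (lebesgue_on UNIV)"
  unfolding lebesgue_on_UNIV_eq
  using assms by (intro measurable_completion) simp

lemma half_abs:
  fixes u v e :: real
  assumes "\<bar>u\<bar> < e" "\<bar>v\<bar> < e"
  shows "\<bar>(u + v) / 2\<bar> \<le> e"
  using assms by (simp add: abs_if field_simps split: if_splits)

lemma G_unif:
  fixes \<Phi> :: "(real^'n) \<times> (real^'n) \<Rightarrow> real"
  assumes HD: "HD \<Phi> D1 D2" and z: "\<forall>x. \<Phi> (x, x) = 0" and R: "0 \<le> R" and \<epsilon>: "0 < \<epsilon>"
  shows "eventually (\<lambda>h. \<forall>x\<in>cball 0 R. \<bar>G \<Phi> h x - (\<Sum>i\<in>UNIV. D2 i (x, x))\<bar> \<le> \<epsilon>) (at_right 0)"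
proof -
  define c where "c = 2 * real CARD('n) + 1"
  have c: "c > 0" by (simp add: c_def)
  define C where "C = cball (0::(real^'n) \<times> (real^'n)) (2 * R + c)"
  define \<epsilon>' where "\<epsilon>' = \<epsilon> / real CARD('n)"
  have \<epsilon>': "\<epsilon>' > 0" using \<epsilon> by (simp add: \<epsilon>'_def)
  have "\<exists>d>0. \<forall>a\<in>C. \<forall>b\<in>C. dist a b < d \<longrightarrow> dist (D2 i a) (D2 i b) < \<epsilon>'" for i
  proof -
    have "continuous_on C (D2 i)" using HD unfolding HD_def by (meson continuous_on_subset top_greatest)
    then have "uniformly_continuous_on C (D2 i)"
      by (intro compact_uniformly_continuous) (auto simp: C_def)
    then show ?thesis using \<epsilon>' unfolding uniformly_continuous_on_def by metis
  qed
  then obtain d where d: "\<And>i. d i > 0"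
    "\<And>i a b. a \<in> C \<Longrightarrow> b \<in> C \<Longrightarrow> dist a b < d i \<Longrightarrow> dist (D2 i a) (D2 i b) < \<epsilon>'"
    by metis
  have ev: "eventually (\<lambda>h. 0 < h \<and> h < 1 \<and> c * h < d i) (at_right 0)" for i
  proof -
    have "min 1 (d i / c) > 0" using d(1) c by simp
    moreover have "\<forall>y>0. y < min 1 (d i / c) \<longrightarrow> 0 < y \<and> y < 1 \<and> c * y < d i"
      using c by (auto simp: field_simps)
    ultimately show ?thesis unfolding eventually_at_right_field by blast
  qed
  have "eventually (\<lambda>h. \<forall>i. 0 < h \<and> h < 1 \<and> c * h < d i) (at_right 0)"
    by (rule eventually_all_finite) (rule ev)
  then show ?thesis
  proof (rule eventually_mono)
    fix h assume H: "\<forall>i. 0 < h \<and> h < 1 \<and> c * h < d i"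
    then have h: "0 < h" "h < 1" by auto
    show "\<forall>x\<in>cball 0 R. \<bar>G \<Phi> h x - (\<Sum>i\<in>UNIV. D2 i (x, x))\<bar> \<le> \<epsilon>"
    proof
      fix x :: "real^'n" assume x: "x \<in> cball 0 R"
      define p where "p = P h x"
      have xx2: "norm (x, x) \<le> 2 * R"
      proof -
        have "norm (x, x) \<le> norm x + norm x" by (rule norm_Pair_le)
        also have "\<dots> \<le> 2 * R" using x by simp
        finally show ?thesis .
      qed
      have xxC: "(x, x) \<in> C" using xx2 c by (simp add: C_def)
      have close: "\<bar>D2 i (p, p + s *\<^sub>R axis i 1) - D2 i (x, x)\<bar> < \<epsilon>'" if s: "\<bar>s\<bar> < h" for i s
      proof -
        have dd: "dist (p, p + s *\<^sub>R axis i 1) (x, x) \<le> c * h"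
          using P_near[OF h(1), of s x i] s unfolding p_def c_def by (simp add: algebra_simps)
        have "norm (p, p + s *\<^sub>R axis i 1) \<le> norm (x, x) + dist (p, p + s *\<^sub>R axis i 1) (x, x)"
          by (metis dist_norm norm_triangle_sub)
        also have "\<dots> \<le> 2 * R + c * h" using xx2 dd by simp
        also have "\<dots> \<le> 2 * R + c" using c h by simp
        finally have "(p, p + s *\<^sub>R axis i 1) \<in> C" by (simp add: C_def)
        moreover have "dist (p, p + s *\<^sub>R axis i 1) (x, x) < d i" using dd H by (meson le_less_trans)
        ultimately show ?thesis using d(2)[OF _ xxC] by (simp add: dist_real_def)
      qed
      have trm: "\<bar>(\<Phi> (p, p + h *\<^sub>R axis i 1) + \<Phi> (p, p - h *\<^sub>R axis i 1)) / h^2 - D2 i (x, x)\<bar> \<le> \<epsilon>'" for i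
      proof -
        obtain s1 s2 where s: "\<bar>s1\<bar> < h" "\<bar>s2\<bar> < h"
          "\<Phi> (p, p + h *\<^sub>R axis i 1) + \<Phi> (p, p - h *\<^sub>R axis i 1)
             = h^2 / 2 * (D2 i (p, p + s1 *\<^sub>R axis i 1) + D2 i (p, p + s2 *\<^sub>R axis i 1))"
          using second_diff[OF HD _ h(1), of p i] z by blast
        have "(\<Phi> (p, p + h *\<^sub>R axis i 1) + \<Phi> (p, p - h *\<^sub>R axis i 1)) / h^2 - D2 i (x, x)
           = ((D2 i (p, p + s1 *\<^sub>R axis i 1) - D2 i (x, x)) + (D2 i (p, p + s2 *\<^sub>R axis i 1) - D2 i (x, x))) / 2"
          unfolding s(3) using h(1) by (simp add: field_simps)
        moreover have "\<bar>D2 i (p, p + s1 *\<^sub>R axis i 1) - D2 i (x, x)\<bar> < \<epsilon>'" by (rule close[OF s(1)])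
        moreover have "\<bar>D2 i (p, p + s2 *\<^sub>R axis i 1) - D2 i (x, x)\<bar> < \<epsilon>'" by (rule close[OF s(2)])
        ultimately show ?thesis using half_abs by (simp only:)
      qed
      have "G \<Phi> h x - (\<Sum>i\<in>UNIV. D2 i (x, x))
          = (\<Sum>i\<in>UNIV. (\<Phi> (p, p + h *\<^sub>R axis i 1) + \<Phi> (p, p - h *\<^sub>R axis i 1)) / h^2 - D2 i (x, x))"
        by (simp add: G_def p_def sum_divide_distrib sum_subtractf)
      also have "\<bar>\<dots>\<bar> \<le> (\<Sum>i\<in>UNIV. \<bar>(\<Phi> (p, p + h *\<^sub>R axis i 1) + \<Phi> (p, p - h *\<^sub>R axis i 1)) / h^2 - D2 i (x, x)\<bar>)"
        by (rule sum_abs)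
      also have "\<dots> \<le> (\<Sum>i\<in>(UNIV::'n set). \<epsilon>')" by (intro sum_mono trm)
      also have "\<dots> = \<epsilon>" by (simp add: \<epsilon>'_def)
      finally show "\<bar>G \<Phi> h x - (\<Sum>i\<in>UNIV. D2 i (x, x))\<bar> \<le> \<epsilon>" .
    qed
  qed
qed



lemma main_conv:
  fixes \<Phi> :: "(real^'n) \<times> (real^'n) \<Rightarrow> real" and \<psi> :: "real \<Rightarrow> int^'n \<Rightarrow> real"
  assumes HD: "HD \<Phi> D1 D2" and z: "\<forall>x. \<Phi> (x, x) = 0"
    and K: "\<forall>h. 0 < h \<and> h < 1 \<longrightarrow> kirchhoff_div h \<Phi> (\<psi> h)" and \<phi>: "Cc \<phi>"
  shows "((\<lambda>h. integral UNIV (\<lambda>x. Qfun h (\<psi> h) x * \<phi> x))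
              \<longlongrightarrow> integral UNIV (\<lambda>x. lap_y \<Phi> x * \<phi> x)) (at_right 0)"
proof -
  define L where "L x = (\<Sum>i\<in>UNIV. D2 i (x, x))" for x :: "real^'n"
  have lapL: "lap_y \<Phi> = L" using lap_y_HD[OF HD] by (auto simp: L_def)
  obtain Ks where Ks: "compact Ks" "\<And>x. x \<notin> Ks \<Longrightarrow> \<phi> x = 0" and c\<phi>: "continuous_on UNIV \<phi>"
    using \<phi> unfolding Cc_def by blast
  obtain R where R: "R > 0" "\<And>x. x \<in> Ks \<Longrightarrow> norm x \<le> R"
    using compact_imp_bounded[OF Ks(1)] unfolding bounded_pos by blast
  have cD2: "continuous_on UNIV (D2 i)" for i using HD unfolding HD_def by blast
  have cL: "continuous_on UNIV L" unfolding L_def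
    by (intro continuous_intros continuous_on_compose2[OF cD2]) auto
  have cPhi: "continuous_on UNIV \<Phi>" using HD unfolding HD_def by blast
  have Lint: "(\<lambda>x. L x * \<phi> x) integrable_on UNIV"
    by (rule Cc_integrable[OF _ Ks(1)]) (use Ks(2) cL c\<phi> in \<open>auto intro!: continuous_intros\<close>)
  have aint: "(\<lambda>x. \<bar>\<phi> x\<bar>) integrable_on UNIV"
    by (rule Cc_integrable[OF _ Ks(1)]) (use Ks(2) c\<phi> in \<open>auto intro!: continuous_intros\<close>)
  define I where "I = integral UNIV (\<lambda>x. \<bar>\<phi> x\<bar>)"
  have I0: "I \<ge> 0" unfolding I_def by (rule integral_nonneg[OF aint]) simp
  have Qeq: "eventually (\<lambda>h. integral UNIV (\<lambda>x. Qfun h (\<psi> h) x * \<phi> x) = integral UNIV (\<lambda>x. G \<Phi> h x * \<phi> x)) (at_right 0)"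
  proof -
    have "eventually (\<lambda>h. 0 < h \<and> h < (1::real)) (at_right 0)"
      unfolding eventually_at_right_field by (intro exI[of _ 1]) auto
    then show ?thesis
    proof (rule eventually_mono)
      fix h :: real assume h: "0 < h \<and> h < 1"
      have "Qfun h (\<psi> h) x = G \<Phi> h x" for x
        using psi_eq[of h \<Phi> "\<psi> h" "fl h x"] K h
        by (simp add: Qfun_eq G_def P_def)
      then show "integral UNIV (\<lambda>x. Qfun h (\<psi> h) x * \<phi> x) = integral UNIV (\<lambda>x. G \<Phi> h x * \<phi> x)"
        by simp
    qed
  qed
  have "((\<lambda>h. integral UNIV (\<lambda>x. G \<Phi> h x * \<phi> x)) \<longlongrightarrow> integral UNIV (\<lambda>x. L x * \<phi> x)) (at_right 0)"
    unfolding tendsto_iff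
  proof (intro allI impI)
    fix e :: real assume e: "0 < e"
    define \<epsilon> where "\<epsilon> = e / (I + 1)"
    have \<epsilon>: "0 < \<epsilon>" using e I0 by (simp add: \<epsilon>_def)
    have "\<epsilon> * I < e" using e I0 by (simp add: \<epsilon>_def field_simps)
    have ev: "eventually (\<lambda>h. 0 < h \<and> (\<forall>x\<in>cball 0 R. \<bar>G \<Phi> h x - L x\<bar> \<le> \<epsilon>)) (at_right 0)"
      using G_unif[OF HD z _ \<epsilon>, of R] R(1) eventually_at_right_less[of "0::real"]
      by (auto simp: L_def elim: eventually_elim2)
    then show "eventually (\<lambda>h. dist (integral UNIV (\<lambda>x. G \<Phi> h x * \<phi> x)) (integral UNIV (\<lambda>x. L x * \<phi> x)) < e) (at_right 0)"
    proof (rule eventually_mono)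
      fix h assume H: "0 < h \<and> (\<forall>x\<in>cball 0 R. \<bar>G \<Phi> h x - L x\<bar> \<le> \<epsilon>)"
      define f1 where "f1 x = (G \<Phi> h x - L x) * \<phi> x" for x
      have bnd: "\<bar>f1 x\<bar> \<le> \<epsilon> * \<bar>\<phi> x\<bar>" for x
      proof (cases "x \<in> Ks")
        case True
        then have "x \<in> cball 0 R" using R(2) by simp
        then have "\<bar>G \<Phi> h x - L x\<bar> \<le> \<epsilon>" using H by blast
        then show ?thesis unfolding f1_def abs_mult by (intro mult_right_mono) auto
      qed (simp add: f1_def Ks(2))
      have meas: "f1 \<in> borel_measurable (lebesgue_on UNIV)"
      proof (rule borel_to_lebesgue)
        have "G \<Phi> h \<in> borel_measurable borel" by (rule G_meas[OF cPhi])
        moreover have "L \<in> borel_measurable borel" by (rule borel_measurable_continuous_onI[OF cL])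
        moreover have "\<phi> \<in> borel_measurable borel" by (rule borel_measurable_continuous_onI[OF c\<phi>])
        ultimately show "f1 \<in> borel_measurable borel" unfolding f1_def[abs_def] by measurable
      qed
      have aint2: "(\<lambda>x. \<epsilon> * \<bar>\<phi> x\<bar>) integrable_on UNIV"
        using integrable_on_cmult_left[OF aint, of \<epsilon>] by simp
      have f1int: "f1 integrable_on UNIV"
        by (rule measurable_bounded_by_integrable_imp_integrable_real[OF meas, of "\<lambda>x. \<epsilon> * \<bar>\<phi> x\<bar>"])
           (use aint2 bnd in auto)
      have "integral UNIV (\<lambda>x. G \<Phi> h x * \<phi> x) = integral UNIV (\<lambda>x. f1 x + L x * \<phi> x)"
        by (simp add: f1_def algebra_simps)
      also have "\<dots> = integral UNIV f1 + integral UNIV (\<lambda>x. L x * \<phi> x)"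
        by (rule integral_add[OF f1int Lint])
      finally have eq: "integral UNIV (\<lambda>x. G \<Phi> h x * \<phi> x) - integral UNIV (\<lambda>x. L x * \<phi> x) = integral UNIV f1"
        by simp
      have "norm (integral UNIV f1) \<le> integral UNIV (\<lambda>x. \<epsilon> * \<bar>\<phi> x\<bar>)"
        by (rule integral_norm_bound_integral[OF f1int]) (use aint2 bnd in auto)
      also have "\<dots> = \<epsilon> * I" by (simp add: I_def)
      finally show "dist (integral UNIV (\<lambda>x. G \<Phi> h x * \<phi> x)) (integral UNIV (\<lambda>x. L x * \<phi> x)) < e"
        using \<open>\<epsilon> * I < e\<close> by (simp add: dist_real_def eq)
    qed
  qed
  then show ?thesis unfolding lapL using tendsto_cong[OF Qeq] by simp
qed



lemma cont_of_deriv: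
  assumes "\<forall>x. (g has_derivative blinfun_apply (g' x)) (at x)"
  shows "continuous_on UNIV g"
  using assms by (intro continuous_at_imp_continuous_on ballI) (metis has_derivative_continuous)

lemma HD_C2:
  fixes \<Phi> :: "(real^'n) \<times> (real^'n) \<Rightarrow> real"
  assumes "C2 \<Phi>"
  shows "\<exists>D1 D2. HD \<Phi> D1 D2"
proof -
  obtain g' :: "(real^'n) \<times> (real^'n) \<Rightarrow> ((real^'n) \<times> (real^'n)) \<Rightarrow>\<^sub>L real"
    and g'' :: "(real^'n) \<times> (real^'n) \<Rightarrow> ((real^'n) \<times> (real^'n)) \<Rightarrow>\<^sub>L (((real^'n) \<times> (real^'n)) \<Rightarrow>\<^sub>L real)"
    where d: "\<forall>x. (\<Phi> has_derivative blinfun_apply (g' x)) (at x)"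
      and dd: "\<forall>x. (g' has_derivative blinfun_apply (g'' x)) (at x)"
      and c: "continuous_on UNIV g''"
    using assms unfolding C2_def by blast
  define D1 where "D1 i z = g' z (0, axis i 1)" for i :: 'n and z
  define D2 where "D2 i z = g'' z (0, axis i 1) (0, axis i 1)" for i :: 'n and z
  have "HD \<Phi> D1 D2"
    unfolding HD_def
  proof (intro conjI allI)
    show "continuous_on UNIV \<Phi>" by (rule cont_of_deriv[OF d])
    fix i :: 'n and x y :: "real^'n"
    have eq: "(x, y) + t *\<^sub>R (0, axis i 1) = (x, y + t *\<^sub>R axis i 1)" for t :: real by simp
    show "((\<lambda>t. \<Phi> (x, y + t *\<^sub>R axis i 1)) has_real_derivative D1 i (x, y)) (at 0)"
      using C2_dir(1)[OF d dd, of "(x, y)" "(0, axis i 1)"] by (simp add: eq D1_def)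
    show "((\<lambda>t. D1 i (x, y + t *\<^sub>R axis i 1)) has_real_derivative D2 i (x, y)) (at 0)"
      using C2_dir(2)[OF d dd, of "(x, y)" "(0, axis i 1)"] by (simp add: eq D1_def D2_def)
  next
    fix i :: 'n
    show "continuous_on UNIV (D2 i)" unfolding D2_def[abs_def]
      by (intro continuous_intros c)
  qed
  then show ?thesis by blast
qed

lemma HD_f:
  fixes f :: "real^'n \<Rightarrow> real"
  assumes "C2 f"
  shows "\<exists>D1 D2. HD (\<lambda>(x, y). f y - f x) D1 D2"
proof -
  obtain g' :: "real^'n \<Rightarrow> (real^'n) \<Rightarrow>\<^sub>L real"
    and g'' :: "real^'n \<Rightarrow> (real^'n) \<Rightarrow>\<^sub>L ((real^'n) \<Rightarrow>\<^sub>L real)"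
    where d: "\<forall>x. (f has_derivative blinfun_apply (g' x)) (at x)"
      and dd: "\<forall>x. (g' has_derivative blinfun_apply (g'' x)) (at x)"
      and c: "continuous_on UNIV g''"
    using assms unfolding C2_def by blast
  define D1 where "D1 i z = g' (snd z) (axis i 1)" for i :: 'n and z :: "(real^'n) \<times> (real^'n)"
  define D2 where "D2 i z = g'' (snd z) (axis i 1) (axis i 1)" for i :: 'n and z :: "(real^'n) \<times> (real^'n)"
  have "HD (\<lambda>(x, y). f y - f x) D1 D2"
    unfolding HD_def
  proof (intro conjI allI)
    have "continuous_on UNIV f" by (rule cont_of_deriv[OF d])
    then show "continuous_on UNIV (\<lambda>(x, y). f y - f x)"
      unfolding case_prod_beta
      by (intro continuous_intros continuous_on_compose2[OF \<open>continuous_on UNIV f\<close>]) auto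
    fix i :: 'n and x y :: "real^'n"
    have "((\<lambda>t. f (y + t *\<^sub>R axis i 1) - f x) has_real_derivative D1 i (x, y) - 0) (at 0)"
      using C2_dir(1)[OF d dd, of y "axis i 1"] by (intro DERIV_diff DERIV_const) (simp_all add: D1_def)
    then show "((\<lambda>t. (\<lambda>(x, y). f y - f x) (x, y + t *\<^sub>R axis i 1)) has_real_derivative D1 i (x, y)) (at 0)"
      by simp
    show "((\<lambda>t. D1 i (x, y + t *\<^sub>R axis i 1)) has_real_derivative D2 i (x, y)) (at 0)"
      using C2_dir(2)[OF d dd, of y "axis i 1"] by (simp add: D1_def D2_def)
  next
    fix i :: 'n
    show "continuous_on UNIV (D2 i)" unfolding D2_def[abs_def]
      by (intro continuous_intros continuous_on_compose2[OF c]) auto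
  qed
  then show ?thesis by blast
qed

lemma deriv_minus_const: "deriv (\<lambda>t. g t - c) = deriv (g :: real \<Rightarrow> real)"
proof -
  have "((\<lambda>t. g t - c) has_real_derivative D) (at x) \<longleftrightarrow> (g has_real_derivative D) (at x)" for D x
  proof
    assume "((\<lambda>t. g t - c) has_real_derivative D) (at x)"
    from DERIV_add[OF this DERIV_const[of c]] show "(g has_real_derivative D) (at x)" by simp
  next
    assume "(g has_real_derivative D) (at x)"
    from DERIV_diff[OF this DERIV_const[of c]] show "((\<lambda>t. g t - c) has_real_derivative D) (at x)" by simp
  qed
  then show ?thesis unfolding deriv_def by (intro ext) simp
qed

lemma lap_y_f: "lap_y (\<lambda>(x, y). f y - f x) = lap f"
proof (intro ext)
  fix x
  show "lap_y (\<lambda>(x, y). f y - f x) x = lap f x"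
    unfolding lap_y_def lap_def
    by (simp add: numeral_2_eq_2 deriv_minus_const)
qed

theorem theorem10p2:
  fixes \<Phi> :: "(real^'n) \<times> (real^'n) \<Rightarrow> real"
    and \<psi> :: "real \<Rightarrow> int^'n \<Rightarrow> real"
    and f :: "real^'n \<Rightarrow> real"
    and \<psi>f :: "real \<Rightarrow> int^'n \<Rightarrow> real"
  assumes "C2 \<Phi>"
    and "\<forall>x. \<Phi> (x, x) = 0"
    and "\<forall>h. 0 < h \<and> h < 1 \<longrightarrow> kirchhoff_div h \<Phi> (\<psi> h)"
    and "C2 f"
    and "\<forall>h. 0 < h \<and> h < 1 \<longrightarrow> kirchhoff_div h (\<lambda>(x, y). f y - f x) (\<psi>f h)"
  shows "(\<forall>\<phi>. Cc \<phi> \<longrightarrow>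
           ((\<lambda>h. integral UNIV (\<lambda>x. Qfun h (\<psi> h) x * \<phi> x))
              \<longlongrightarrow> integral UNIV (\<lambda>x. lap_y \<Phi> x * \<phi> x)) (at_right 0))
       \<and> (\<forall>\<phi>. Cc \<phi> \<longrightarrow>
           ((\<lambda>h. integral UNIV (\<lambda>x. Qfun h (\<psi>f h) x * \<phi> x))
              \<longlongrightarrow> integral UNIV (\<lambda>x. lap f x * \<phi> x)) (at_right 0))"
proof (intro conjI allI impI)
  fix \<phi> :: "real^'n \<Rightarrow> real" assume \<phi>: "Cc \<phi>"
  obtain D1 D2 where HD: "HD \<Phi> D1 D2" using HD_C2[OF assms(1)] by blast
  show "((\<lambda>h. integral UNIV (\<lambda>x. Qfun h (\<psi> h) x * \<phi> x))
              \<longlongrightarrow> integral UNIV (\<lambda>x. lap_y \<Phi> x * \<phi> x)) (at_right 0)"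
    by (rule main_conv[OF HD assms(2) assms(3) \<phi>])
next
  fix \<phi> :: "real^'n \<Rightarrow> real" assume \<phi>: "Cc \<phi>"
  obtain D1 D2 where HD: "HD (\<lambda>(x, y). f y - f x) D1 D2" using HD_f[OF assms(4)] by blast
  have z: "\<forall>x. (\<lambda>(x, y). f y - f x) (x, x) = 0" by simp
  show "((\<lambda>h. integral UNIV (\<lambda>x. Qfun h (\<psi>f h) x * \<phi> x))
              \<longlongrightarrow> integral UNIV (\<lambda>x. lap f x * \<phi> x)) (at_right 0)"
    using main_conv[OF HD z assms(5) \<phi>] by (simp add: lap_y_f)
qed


end
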